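(* Let $n$ be even, let $d\ge3$ be odd, and let $r$ be a positive integer with $r(r-1)<n$. Fix a coordinate direction $k\in\{1,\dots,d-1\}$ and $r$ consecutive values $j,j+1,\dots,j+r-1$ of that coordinate. Let $P\in\Lambda_1(d,n)$ be such that the Latin hypercube $\mathcal H(P)$ agrees with $C_{d-1,n}$ at every cell whose $k$-th coordinate is not among $j,\dots,j+r-1$ (i.e. it agrees with $C_{d-1,n}$ outside these $r$ consecutive hyperplanes). Then $\operatorname{Per}(P)=0$. Furthermore, if $P_1,\dots,P_m\in\Lambda_1(d,n)$ all have this property (for the same fixed $r$ hyperplanes), then every linear combination $a_1P_1+\cdots+a_mP_m$ has permanent $0$.
   Context: Let $I_n=\{1,\dots,n\}$. A $d$-dimensional matrix of order $n$ is a function $I_n^d\to\mathbb R$. A diagonal is a selection of $n$ positions of $I_n^d$ any two of which differ in every coordinate; the permanent $\operatorname{Per}(A)$ is the sum over all diagonals of the product of the entries of $A$ at those positions. A line is the set of positions obtained by varying one coordinate and fixing the others. $\Lambda_1(d,n)$ is the set of $(0,1)$-valued $d$-dimensional matrices of order $n$ with exactly one $1$ in each line. A Latin hypercube of dimension $m$ and order $n$ is a function $H:I_n^m\to I_n$ in which every line contains each symbol exactly once. For $P\in\Lambda_1(d,n)$, $\mathcal H(P)$ is the Latin hypercube of dimension $d-1$ with $\mathcal H(P)(i_1,\dots,i_{d-1})=i_d$ iff $P(i_1,\dots,i_d)=1$. The cyclic Latin hypercube $C_{m,n}$ is defined by $C_{m,n}(x_1,\dots,x_m)\equiv x_1+\cdots+x_m\pmod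 n$, with value taken in $I_n$. A hyperplane of $\mathcal H(P)$ is the set of cells with one coordinate fixed. *)

theory Defs
  imports Complex_Main
begin

text \<open>Positions of \<open>I_n^d\<close>: functions on coordinates \<open>1..d\<close> with values in \<open>1..n\<close>,
  normalised to 0 outside the coordinate range.\<close>
definition positions :: "nat \<Rightarrow> nat \<Rightarrow> (nat \<Rightarrow> nat) set" where
  "positions d n = {x. (\<forall>i\<in>{1..d}. x i \<in> {1..n}) \<and> (\<forall>i. i \<notin> {1..d} \<longrightarrow> x i = 0)}"

type_synonym matrix = "(nat \<Rightarrow> nat) \<Rightarrow> real"

definition is_diagonal :: "nat \<Rightarrow> nat \<Rightarrow> (nat \<Rightarrow> nat) set \<Rightarrow> bool" where
  "is_diagonal d n D \<longleftrightarrow> D \<subseteq> positions d n \<and> card D = n \<and>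
     (\<forall>x\<in>D. \<forall>y\<in>D. x \<noteq> y \<longrightarrow> (\<forall>i\<in>{1..d}. x i \<noteq> y i))"

definition diagonals :: "nat \<Rightarrow> nat \<Rightarrow> (nat \<Rightarrow> nat) set set" where
  "diagonals d n = {D. is_diagonal d n D}"

definition Per :: "nat \<Rightarrow> nat \<Rightarrow> matrix \<Rightarrow> real" where
  "Per d n A = (\<Sum>D\<in>diagonals d n. \<Prod>x\<in>D. A x)"

definition line :: "nat \<Rightarrow> (nat \<Rightarrow> nat) \<Rightarrow> nat \<Rightarrow> (nat \<Rightarrow> nat) set" where
  "line n x i = {x(i := t) | t. t \<in> {1..n}}"

definition Lambda1 :: "nat \<Rightarrow> nat \<Rightarrow> matrix set" where
  "Lambda1 d n = {A. (\<forall>x\<in>positions d n. A x = 0 \<or> A x = 1) \<and>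
     (\<forall>x\<in>positions d n. \<forall>i\<in>{1..d}. card {y\<in>line n x i. A y = 1} = 1)}"

text \<open>The Latin hypercube \<open>\<H>(P)\<close> of dimension \<open>d-1\<close>: cells are positions of \<open>I_n^{d-1}\<close>.\<close>
definition hyp_of :: "nat \<Rightarrow> nat \<Rightarrow> matrix \<Rightarrow> (nat \<Rightarrow> nat) \<Rightarrow> nat" where
  "hyp_of d n P x = (THE t. t \<in> {1..n} \<and> P (x(d := t)) = 1)"

definition cyclic :: "nat \<Rightarrow> nat \<Rightarrow> (nat \<Rightarrow> nat) \<Rightarrow> nat" where
  "cyclic m n x = (THE c. c \<in> {1..n} \<and> c mod n = (\<Sum>i=1..m. x i) mod n)"

definition agrees_outside :: "nat \<Rightarrow> nat \<Rightarrow> nat \<Rightarrow> nat \<Rightarrow> nat \<Rightarrow> matrix \<Rightarrow> bool" where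
  "agrees_outside d n k j r P \<longleftrightarrow>
     (\<forall>x\<in>positions (d - 1) n. x k \<notin> {j..j + r - 1} \<longrightarrow> hyp_of d n P x = cyclic (d - 1) n x)"

end

theory Submission
  imports Defs
begin


lemma line_unique:
  assumes P: "P \<in> Lambda1 d n" and x: "x \<in> positions d n" and i: "i \<in> {1..d}"
    and t1: "t1 \<in> {1..n}" and t2: "t2 \<in> {1..n}"
    and p1: "P (x(i:=t1)) = 1" and p2: "P (x(i:=t2)) = 1"
  shows "t1 = t2"
proof -
  have "card {y\<in>line n x i. P y = 1} = 1" using P x i unfolding Lambda1_def by blast
  then obtain z where z: "{y\<in>line n x i. P y = 1} = {z}" using card_1_singletonE by blast
  have "x(i:=t1) \<in> {y\<in>line n x i. P y = 1}" using t1 p1 unfolding line_def by blast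
  moreover have "x(i:=t2) \<in> {y\<in>line n x i. P y = 1}" using t2 p2 unfolding line_def by blast
  ultimately have "x(i:=t1) = x(i:=t2)" using z by auto
  then show ?thesis by (metis fun_upd_same)
qed

lemma line_exists:
  assumes P: "P \<in> Lambda1 d n" and x: "x \<in> positions d n" and i: "i \<in> {1..d}"
  shows "\<exists>t\<in>{1..n}. P (x(i:=t)) = 1"
proof -
  have "card {y\<in>line n x i. P y = 1} = 1" using P x i unfolding Lambda1_def by blast
  then obtain z where z: "{y\<in>line n x i. P y = 1} = {z}" using card_1_singletonE by blast
  then have "z \<in> line n x i" "P z = 1" by auto
  then show ?thesis unfolding line_def by auto
qed

lemma hyp_of_eq:
  assumes P: "P \<in> Lambda1 d n" and x: "x \<in> positions d n" and d: "d \<ge> 1"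
    and px: "P x = 1"
  shows "hyp_of d n P (x(d:=0)) = x d"
  unfolding hyp_of_def
proof (rule the_equality)
  have "x d \<in> {1..n}" using x d unfolding positions_def by auto
  then show "x d \<in> {1..n} \<and> P (x(d := 0, d := x d)) = 1" using px by simp
next
  fix t assume t: "t \<in> {1..n} \<and> P (x(d := 0, d := t)) = 1"
  have xd: "x d \<in> {1..n}" using x d unfolding positions_def by auto
  show "t = x d"
    by (rule line_unique[OF P x _ _ xd, of d]) (use t d px in auto)
qed

lemma pos_d1_ext:
  assumes y: "y \<in> positions (d - 1) n" and d: "d \<ge> 1" and t: "t \<in> {1..n}"
  shows "y(d:=t) \<in> positions d n"
  using y d t unfolding positions_def by (auto simp: le_diff_conv) 

lemma hyp_of_spec:
  assumes P: "P \<in> Lambda1 d n" and y: "y \<in> positions (d - 1) n" and d: "d \<ge> 1" and n: "n \<ge> 1"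
  shows "hyp_of d n P y \<in> {1..n} \<and> P (y(d := hyp_of d n P y)) = 1"
proof -
  have z: "y(d:=1) \<in> positions d n" using pos_d1_ext[OF y d] n by auto
  obtain t where t: "t \<in> {1..n}" "P ((y(d:=1))(d:=t)) = 1"
    using line_exists[OF P z, of d] d by auto
  have yd: "y d = 0" using y d unfolding positions_def by auto
  have "hyp_of d n P y = t" unfolding hyp_of_def
  proof (rule the_equality)
    show "t \<in> {1..n} \<and> P (y(d := t)) = 1" using t by simp
  next
    fix s assume s: "s \<in> {1..n} \<and> P (y(d := s)) = 1"
    show "s = t" by (rule line_unique[OF P z, of d]) (use s t d in auto)
  qed
  then show ?thesis using t by simp
qed

lemma cyclic_spec:
  assumes n: "n \<ge> 1"
  shows "cyclic m n x \<in> {1..n} \<and> cyclic m n x mod n = (\<Sum>i=1..m. x i) mod n"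
proof -
  let ?s = "(\<Sum>i=1..m. x i) mod n"
  define c where "c = (if ?s = 0 then n else ?s)"
  have c: "c \<in> {1..n} \<and> c mod n = ?s" using n unfolding c_def
    by (auto simp: less_imp_le)
  have "cyclic m n x = c" unfolding cyclic_def
  proof (rule the_equality)
    show "c \<in> {1..n} \<and> c mod n = ?s" by (rule c)
  next
    fix c' assume c': "c' \<in> {1..n} \<and> c' mod n = ?s"
    show "c' = c" using c c' n
      by (metis atLeastAtMost_iff le_neq_implies_less mod_less mod_self nat_less_le less_imp_le_nat zero_less_iff_neq_zero not_one_le_zero le_antisym)
  qed
  then show ?thesis using c by simp
qed

lemma modeq_1n:
  fixes a b n :: nat
  assumes a: "a \<in> {1..n}" and b: "b \<in> {1..n}" and e: "int a mod int n = int b mod int n"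
  shows "a = b"
proof -
  have e2: "a mod n = b mod n" using e by (metis of_nat_eq_iff zmod_int)
  show ?thesis
  proof (cases "a = n")
    case True
    then show ?thesis using e2 b
      by (metis atLeastAtMost_iff le_neq_implies_less mod_less mod_self not_one_le_zero)
  next
    case False
    then have "a < n" using a by auto
    then show ?thesis using e2 a b
      by (metis atLeastAtMost_iff le_neq_implies_less mod_less mod_self not_one_le_zero)
  qed
qed

lemma sum_upd_int:
  fixes f :: "nat \<Rightarrow> nat"
  assumes "finite A" "k \<in> A"
  shows "(\<Sum>i\<in>A. int ((f(k:=t)) i)) = (\<Sum>i\<in>A. int (f i)) - int (f k) + int t"
proof -
  have "(\<Sum>i\<in>A. int ((f(k:=t)) i)) = int t + (\<Sum>i\<in>A-{k}. int ((f(k:=t)) i))"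
    using assms by (simp add: sum.remove)
  also have "(\<Sum>i\<in>A-{k}. int ((f(k:=t)) i)) = (\<Sum>i\<in>A-{k}. int (f i))"
    by (rule sum.cong) auto
  also have "(\<Sum>i\<in>A. int (f i)) = int (f k) + (\<Sum>i\<in>A-{k}. int (f i))"
    using assms by (simp add: sum.remove)
  ultimately show ?thesis by simp
qed

lemma point_prop:
  assumes P: "P \<in> Lambda1 d n" and ag: "agrees_outside d n k j r P"
    and x: "x \<in> positions d n" and px: "P x = 1" and d: "d \<ge> 3"
    and k: "k \<in> {1..d-1}" and n: "n \<ge> 1"
  shows "\<exists>c. int (x d) mod int n = ((\<Sum>i=1..d-1. int (x i)) - int (x k) + int c) mod int n
     \<and> (x k \<notin> {j..j+r-1} \<longrightarrow> c = x k) \<and> (x k \<in> {j..j+r-1} \<longrightarrow> c \<in> {j..j+r-1})"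
proof -
  define y where "y = x(d:=0)"
  have d1: "d \<ge> 1" using d by simp
  have kd: "k \<noteq> d" using k by auto
  have y: "y \<in> positions (d-1) n" using x d unfolding y_def positions_def by auto
  have hd: "hyp_of d n P y = x d" unfolding y_def by (rule hyp_of_eq[OF P x d1 px])
  have xd: "x d \<in> {1..n}" using x d1 unfolding positions_def by auto
  have xk: "x k \<in> {1..n}" using x k unfolding positions_def by auto
  have yk: "y k = x k" using kd unfolding y_def by simp
  have sumy: "(\<Sum>i=1..d-1. y i) = (\<Sum>i=1..d-1. x i)"
    by (rule sum.cong) (auto simp: y_def)
  define S where "S = (\<Sum>i=1..d-1. int (x i)) - int (x k)"
  show ?thesis
  proof (cases "x k \<in> {j..j+r-1}")
    case False
    then have "hyp_of d n P y = cyclic (d-1) n y" using ag y yk unfolding agrees_outside_def by auto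
    then have "x d mod n = (\<Sum>i=1..d-1. x i) mod n" using cyclic_spec[OF n] hd sumy by metis
    then have "int (x d) mod int n = (\<Sum>i=1..d-1. int (x i)) mod int n"
      by (metis of_nat_sum zmod_int)
    then show ?thesis using False by (intro exI[of _ "x k"]) simp
  next
    case True
    define r0 where "r0 = (int (x d) - S) mod int n"
    define t where "t = (if r0 = 0 then n else nat r0)"
    have r0: "0 \<le> r0" "r0 < int n" using n unfolding r0_def by auto
    have t1: "t \<in> {1..n}" using r0 unfolding t_def by auto
    have t2: "int t mod int n = (int (x d) - S) mod int n"
      using r0 unfolding t_def r0_def by auto
    have "t \<in> {j..j+r-1}"
    proof (rule ccontr)
      assume tn: "t \<notin> {j..j+r-1}"
      define y' where "y' = y(k:=t)"
      have y': "y' \<in> positions (d-1) n" using y t1 k unfolding y'_def positions_def by auto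
      have "hyp_of d n P y' = cyclic (d-1) n y'" using ag y' tn unfolding agrees_outside_def y'_def by auto
      moreover have hs: "hyp_of d n P y' \<in> {1..n} \<and> P (y'(d := hyp_of d n P y')) = 1"
        by (rule hyp_of_spec[OF P y' d1 n])
      ultimately have v: "cyclic (d-1) n y' \<in> {1..n}" "P (y'(d := cyclic (d-1) n y')) = 1" by auto
      have "cyclic (d-1) n y' mod n = (\<Sum>i=1..d-1. y' i) mod n" using cyclic_spec[OF n] by blast
      then have "int (cyclic (d-1) n y') mod int n = (\<Sum>i=1..d-1. int (y' i)) mod int n"
        by (metis of_nat_sum zmod_int)
      also have "(\<Sum>i=1..d-1. int (y' i)) = (\<Sum>i=1..d-1. int (y i)) - int (y k) + int t"
        unfolding y'_def by (rule sum_upd_int) (use k in auto)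
      also have "(\<Sum>i=1..d-1. int (y i)) = (\<Sum>i=1..d-1. int (x i))"
        by (metis of_nat_sum sumy)
      finally have "int (cyclic (d-1) n y') mod int n = (S + int t) mod int n"
        unfolding S_def yk by (simp add: algebra_simps)
      also have "\<dots> = (S + (int (x d) - S)) mod int n" using t2 by (metis mod_add_right_eq)
      finally have "int (cyclic (d-1) n y') mod int n = int (x d) mod int n" by simp
      then have cv: "cyclic (d-1) n y' = x d" using modeq_1n v(1) xd by blast
      have "y'(d := x d) = x(k := t)" unfolding y'_def y_def using kd by (auto simp: fun_eq_iff)
      then have p1: "P (x(k:=t)) = 1" using v(2) cv by simp
      have p2: "P (x(k:=x k)) = 1" using px by simp
      have "t = x k" by (rule line_unique[OF P x _ t1 xk p1 p2]) (use k in auto)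
      then show False using tn True by simp
    qed
    moreover have "int (x d) mod int n = (S + int t) mod int n"
    proof -
      have "(S + int t) mod int n = (S + (int (x d) - S)) mod int n" using t2 by (metis mod_add_right_eq)
      then show ?thesis by simp
    qed
    ultimately show ?thesis using True unfolding S_def by (intro exI[of _ t]) simp
  qed
qed



lemma arith_final:
  fixes h q G E :: int
  assumes h: "h > 0" and q: "q \<ge> 0" and G: "G = h*(2*h+1)" and E: "2*\<bar>E\<bar> < 2*h"
    and c: "G mod (2*h) = ((2*q+2)*G + E) mod (2*h)"
  shows False
proof -
  have "(2*h) dvd (((2*q+2)*G + E) - G)" using c by (metis mod_eq_dvd_iff)
  moreover have "((2*q+2)*G + E) - G = (h + E) + (2*h)*(2*q*h+q+h)" unfolding G by (simp add: algebra_simps)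
  ultimately have "(2*h) dvd (h + E)" by (metis dvd_add_left_iff dvd_triv_left)
  then obtain z where z: "h + E = (2*h)*z" by (auto elim: dvdE)
  have "0 < h + E" "h + E < 2*h" using E by auto
  then have "0 < (2*h)*z" "(2*h)*z < 2*h" using z by auto
  then have "z > 0" "z < 1" using h by (auto simp: zero_less_mult_iff mult_less_cancel_left1)
  then show False by simp
qed

lemma gauss_int: "2 * (\<Sum>t\<in>{j..<j+r}. int t) = int r * (2*int j + int r - 1)"
proof (induction r)
  case 0 then show ?case by simp
next
  case (Suc r)
  have "{j..<j+Suc r} = insert (j+r) {j..<j+r}" by auto
  then have "(\<Sum>t\<in>{j..<j+Suc r}. int t) = int (j+r) + (\<Sum>t\<in>{j..<j+r}. int t)" by simp
  then show ?case using Suc by (simp add: algebra_simps)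
qed

lemma diag_bij:
  assumes D: "is_diagonal d n D" and i: "i \<in> {1..d}"
  shows "bij_betw (\<lambda>x. x i) D {1..n}"
proof -
  have inj: "inj_on (\<lambda>x. x i) D" using D i unfolding is_diagonal_def inj_on_def by blast
  have sub: "(\<lambda>x. x i) ` D \<subseteq> {1..n}" using D i unfolding is_diagonal_def positions_def by auto
  have "card ((\<lambda>x. x i) ` D) = n" using D inj card_image unfolding is_diagonal_def by metis
  then have "(\<lambda>x. x i) ` D = {1..n}" using sub by (simp add: card_subset_eq)
  then show ?thesis using inj unfolding bij_betw_def by simp
qed



lemma no_diag:
  fixes n d r k j :: nat and cf :: "(nat \<Rightarrow> nat) \<Rightarrow> nat"
  assumes D: "is_diagonal d n D" and ev: "even n" and od: "odd d" and d3: "d \<ge> 3"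
    and r0: "r > 0" and rn: "r * (r - 1) < n"
    and k: "k \<in> {1..d - 1}" and j1: "j \<ge> 1" and jr: "j + r - 1 \<le> n"
    and cf: "\<forall>x\<in>D. int (x d) mod int n = ((\<Sum>i=1..d-1. int (x i)) - int (x k) + int (cf x)) mod int n
       \<and> (x k \<notin> {j..j+r-1} \<longrightarrow> cf x = x k) \<and> (x k \<in> {j..j+r-1} \<longrightarrow> cf x \<in> {j..j+r-1})"
  shows False
proof -
  have n1: "n \<ge> 1" using rn by simp
  have fin: "finite D" using D n1 unfolding is_diagonal_def by (metis card_eq_0_iff not_one_le_zero)
  define G where "G = (\<Sum>t\<in>{1..n}. int t)"
  have G2: "2 * G = int n * (int n + 1)"
  proof -
    have "{1..n} = {1..<1+n}" by auto
    then show ?thesis unfolding G_def using gauss_int[of 1 n] by simp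
  qed
  have colsum: "(\<Sum>x\<in>D. int (x i)) = G" if i: "i \<in> {1..d}" for i
    unfolding G_def using sum.reindex_bij_betw[OF diag_bij[OF D i], of int] by simp
  define S where "S = (\<lambda>x::nat\<Rightarrow>nat. (\<Sum>i=1..d-1. int (x i)))"
  define R where "R = {x\<in>D. x k \<in> {j..j+r-1}}"
  define E where "E = (\<Sum>x\<in>R. int (cf x) - int (x k))"
  have "(\<Sum>x\<in>D. int (x d)) mod int n = (\<Sum>x\<in>D. int (x d) mod int n) mod int n"
    by (simp add: mod_sum_eq)
  also have "\<dots> = (\<Sum>x\<in>D. (S x - int (x k) + int (cf x)) mod int n) mod int n"
  proof -
    have "\<And>x. x \<in> D \<Longrightarrow> int (x d) mod int n = (S x - int (x k) + int (cf x)) mod int n"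
      using cf unfolding S_def by auto
    then have "(\<Sum>x\<in>D. int (x d) mod int n) = (\<Sum>x\<in>D. (S x - int (x k) + int (cf x)) mod int n)"
      by (rule sum.cong[OF refl])
    then show ?thesis by simp
  qed
  also have "\<dots> = (\<Sum>x\<in>D. S x + (int (cf x) - int (x k))) mod int n"
    by (simp add: mod_sum_eq algebra_simps)
  also have "(\<Sum>x\<in>D. S x + (int (cf x) - int (x k))) = (\<Sum>x\<in>D. S x) + (\<Sum>x\<in>D. int (cf x) - int (x k))"
    by (simp add: sum.distrib)
  also have "(\<Sum>x\<in>D. S x) = (\<Sum>i=1..d-1. (\<Sum>x\<in>D. int (x i)))"
    unfolding S_def by (rule sum.swap)
  also have "\<dots> = (\<Sum>i=1..d-1. G)" using colsum by (intro sum.cong) auto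
  also have "(\<Sum>x\<in>D. int (cf x) - int (x k)) = E"
  proof -
    have "(\<Sum>x\<in>D. int (cf x) - int (x k)) = (\<Sum>x\<in>R. int (cf x) - int (x k)) + (\<Sum>x\<in>D-R. int (cf x) - int (x k))"
      using fin unfolding R_def by (metis (no_types, lifting) add.commute mem_Collect_eq subsetI sum.subset_diff)
    moreover have "(\<Sum>x\<in>D-R. int (cf x) - int (x k)) = 0" using cf unfolding R_def by (intro sum.neutral) auto
    ultimately show ?thesis unfolding E_def by simp
  qed
  finally have cong: "G mod int n = (int (d-1) * G + E) mod int n"
    using colsum[of d] d3 by simp
  have bijR: "bij_betw (\<lambda>x. x k) R {j..j+r-1}"
  proof -
    have bk: "bij_betw (\<lambda>x. x k) D {1..n}" using diag_bij[OF D] k by auto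
    have "(\<lambda>x. x k) ` R = ((\<lambda>x. x k) ` D) \<inter> {j..j+r-1}" unfolding R_def by blast
    also have "\<dots> = {1..n} \<inter> {j..j+r-1}" using bk unfolding bij_betw_def by simp
    also have "\<dots> = {j..j+r-1}" using j1 jr by auto
    finally show ?thesis using bk unfolding bij_betw_def R_def by (auto intro: inj_on_subset)
  qed
  have cardR: "card R = r" using bij_betw_same_card[OF bijR] r0 by simp
  have finR: "finite R" using fin unfolding R_def by simp
  have sk: "2 * (\<Sum>x\<in>R. int (x k)) = int r * (2*int j + int r - 1)"
  proof -
    have "(\<Sum>x\<in>R. int (x k)) = (\<Sum>t\<in>{j..j+r-1}. int t)"
      using sum.reindex_bij_betw[OF bijR, of int] by simp
    also have "{j..j+r-1} = {j..<j+r}" using r0 by auto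
    finally show ?thesis using gauss_int[of j r] by simp
  qed
  have lo: "int r * int j \<le> (\<Sum>x\<in>R. int (cf x))"
    using sum_bounded_below[of R "int j" "\<lambda>x. int (cf x)"] cf cardR unfolding R_def by auto
  have hi: "(\<Sum>x\<in>R. int (cf x)) \<le> int r * int (j + r - 1)"
    using sum_bounded_above[of R "\<lambda>x. int (cf x)" "int (j+r-1)"] cf cardR unfolding R_def by auto
  have Eeq: "E = (\<Sum>x\<in>R. int (cf x)) - (\<Sum>x\<in>R. int (x k))" unfolding E_def by (simp add: sum_subtractf)
  have rr0: "int (r*(r-1)) = int r * (int r - 1)" using r0 by (simp add: of_nat_diff)
  have rr: "int r * (int r - 1) < int n" using rn rr0 by (metis of_nat_less_iff)
  have jr1: "int (j + r - 1) = int j + int r - 1" using r0 by simp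
  have E2: "2 * \<bar>E\<bar> < int n"
  proof -
    have a: "2*E \<le> int r * (int r - 1)" using Eeq sk hi jr1 by (simp add: algebra_simps)
    have b: "- (int r * (int r - 1)) \<le> 2*E" using Eeq sk lo by (simp add: algebra_simps)
    show ?thesis using a b rr by linarith
  qed
  obtain h where h: "n = 2*h" using ev by (auto elim: evenE)
  obtain m where m: "d = 2*m+1" using od by (auto elim: oddE)
  define q where "q = m - 1"
  have q: "d = 2*q+3" using m d3 unfolding q_def by simp
  show False
  proof (rule arith_final[of "int h" "int q" G E])
    show "int h > 0" using h n1 by simp
    show "int q \<ge> 0" by simp
    show "G = int h * (2 * int h + 1)" using G2 h by (simp add: algebra_simps)
    show "2 * \<bar>E\<bar> < 2 * int h" using E2 h by simp
    show "G mod (2 * int h) = ((2 * int q + 2) * G + E) mod (2 * int h)"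
      using cong h q by (simp add: algebra_simps)
  qed
qed



lemma lin_comb:
  fixes n d r k j :: nat
  assumes ev: "even n" and od: "odd d" and d3: "d \<ge> 3"
    and r0: "r > 0" and rn: "r * (r - 1) < n"
    and k: "k \<in> {1..d - 1}" and j1: "j \<ge> 1" and jr: "j + r - 1 \<le> n"
    and Ps: "\<forall>i<m. Ps i \<in> Lambda1 d n \<and> agrees_outside d n k j r (Ps i)"
  shows "Per d n (\<lambda>x. \<Sum>i<m. a i * Ps i x) = 0"
  unfolding Per_def
proof (rule sum.neutral, rule ballI)
  fix D assume "D \<in> diagonals d n"
  then have D: "is_diagonal d n D" unfolding diagonals_def by simp
  have n1: "n \<ge> 1" using rn by simp
  have fin: "finite D" using D n1 unfolding is_diagonal_def by (metis card_eq_0_iff not_one_le_zero)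
  show "(\<Prod>x\<in>D. \<Sum>i<m. a i * Ps i x) = 0"
  proof (rule ccontr)
    assume "(\<Prod>x\<in>D. \<Sum>i<m. a i * Ps i x) \<noteq> 0"
    then have nz: "\<forall>x\<in>D. (\<Sum>i<m. a i * Ps i x) \<noteq> 0" using fin by (simp add: prod_zero_iff)
    have "\<forall>x\<in>D. \<exists>c. int (x d) mod int n = ((\<Sum>i=1..d-1. int (x i)) - int (x k) + int c) mod int n
       \<and> (x k \<notin> {j..j+r-1} \<longrightarrow> c = x k) \<and> (x k \<in> {j..j+r-1} \<longrightarrow> c \<in> {j..j+r-1})"
    proof
      fix x assume x: "x \<in> D"
      then have xp: "x \<in> positions d n" using D unfolding is_diagonal_def by auto
      obtain i where i: "i < m" "a i * Ps i x \<noteq> 0" using nz x by (metis (no_types, lifting) lessThan_iff sum.neutral)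
      have Pi: "Ps i \<in> Lambda1 d n" "agrees_outside d n k j r (Ps i)" using Ps i by auto
      have "Ps i x = 0 \<or> Ps i x = 1" using Pi(1) xp unfolding Lambda1_def by auto
      then have "Ps i x = 1" using i by auto
      then show "\<exists>c. int (x d) mod int n = ((\<Sum>i=1..d-1. int (x i)) - int (x k) + int c) mod int n
       \<and> (x k \<notin> {j..j+r-1} \<longrightarrow> c = x k) \<and> (x k \<in> {j..j+r-1} \<longrightarrow> c \<in> {j..j+r-1})"
        using point_prop[OF Pi(1) Pi(2) xp _ d3 k n1] by blast
    qed
    then obtain cf where cf: "\<forall>x\<in>D. int (x d) mod int n = ((\<Sum>i=1..d-1. int (x i)) - int (x k) + int (cf x)) mod int n
       \<and> (x k \<notin> {j..j+r-1} \<longrightarrow> cf x = x k) \<and> (x k \<in> {j..j+r-1} \<longrightarrow> cf x \<in> {j..j+r-1})"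
      by metis
    show False by (rule no_diag[OF D ev od d3 r0 rn k j1 jr cf])
  qed
qed

theorem theorem2p5:
  fixes n d r k j :: nat
  assumes "even n" and "odd d" and "d \<ge> 3"
    and "r > 0" and "r * (r - 1) < n"
    and "k \<in> {1..d - 1}" and "j \<ge> 1" and "j + r - 1 \<le> n"
  shows "(\<forall>P. P \<in> Lambda1 d n \<and> agrees_outside d n k j r P \<longrightarrow> Per d n P = 0) \<and>
         (\<forall>m (Ps :: nat \<Rightarrow> matrix) (a :: nat \<Rightarrow> real).
            (\<forall>i<m. Ps i \<in> Lambda1 d n \<and> agrees_outside d n k j r (Ps i)) \<longrightarrow>
            Per d n (\<lambda>x. \<Sum>i<m. a i * Ps i x) = 0)"
proof (intro conjI allI impI)
  fix m and Ps :: "nat \<Rightarrow> matrix" and a :: "nat \<Rightarrow> real"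
  assume "\<forall>i<m. Ps i \<in> Lambda1 d n \<and> agrees_outside d n k j r (Ps i)"
  then show "Per d n (\<lambda>x. \<Sum>i<m. a i * Ps i x) = 0" using lin_comb assms by blast
next
  fix P assume P: "P \<in> Lambda1 d n \<and> agrees_outside d n k j r P"
  have "Per d n (\<lambda>x. \<Sum>i<Suc 0. (\<lambda>_. 1::real) i * (\<lambda>_. P) i x) = 0"
    by (rule lin_comb[OF assms]) (use P in auto)
  then show "Per d n P = 0" by (simp add: lessThan_Suc)
qed


end
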